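(* Let $G=\mathrm{Circ}(a_0,\ldots,a_{n-1})$ be a Hermitian circulant of order $n$ with universal perfect state transfer. If $d$ is an odd divisor of $n$ such that $n/d$ is prime, then $a_d\neq 0$.
   Context: $\mathrm{Circ}(a_0,\ldots,a_{n-1})$ denotes the $n\times n$ matrix $C$ with $C_{j,k}=a_{k-j}$ (indices mod $n$). A graph with Hermitian adjacency matrix $A$ has universal perfect state transfer if for every pair of vertices $v,w$ there is $t>0$ with $|\langle w|e^{-\mathtt{i} At}|v\rangle|=1$. *)

theory Defs
  imports Complex_Main "Jordan_Normal_Form.Matrix"
begin

definition circ :: "nat \<Rightarrow> (nat \<Rightarrow> complex) \<Rightarrow> complex mat" where
  "circ n a = mat n n (\<lambda>(j, k). a (nat ((int k - int j) mod int n)))"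

definition hermitian_mat :: "complex mat \<Rightarrow> bool" where
  "hermitian_mat A \<longleftrightarrow> dim_row A = dim_col A \<and>
     (\<forall>i < dim_row A. \<forall>j < dim_row A. A $$ (j, i) = cnj (A $$ (i, j)))"

definition mat_exp :: "complex mat \<Rightarrow> complex mat" where
  "mat_exp A = mat (dim_row A) (dim_col A)
     (\<lambda>(i, j). \<Sum>m. (A ^\<^sub>m m) $$ (i, j) / of_nat (fact m))"

definition universal_pst :: "complex mat \<Rightarrow> bool" where
  "universal_pst A \<longleftrightarrow> (\<forall>v < dim_row A. \<forall>w < dim_row A. v \<noteq> w \<longrightarrow>
     (\<exists>t::real. t > 0 \<and> cmod (mat_exp ((- \<i> * complex_of_real t) \<cdot>\<^sub>m A) $$ (w, v)) = 1))"

end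

theory Submission
  imports Defs "HOL-Analysis.Complex_Transcendental" "HOL-Computational_Algebra.Polynomial_Factorial"
begin

definition cyc :: "nat \<Rightarrow> int poly" where "cyc p = (\<Sum>r<p. [:0,1:]^r)"

lemma coeff_xpow: "coeff ([:0,1:]^r :: 'a::comm_semiring_1 poly) k = (if k = r then 1 else 0)"
proof (induction r arbitrary: k)
  case 0 then show ?case by (simp add: coeff_1)
next
  case (Suc r) then show ?case by (cases k) (auto simp: coeff_pCons)
qed

lemma coeff_cyc: "coeff (cyc p) k = (if k < p then 1 else 0)"
  unfolding cyc_def by (simp add: coeff_sum coeff_xpow)

lemma degree_cyc: assumes "p \<ge> 1" shows "degree (cyc p) = p - 1"
proof (rule antisym)
  show "degree (cyc p) \<le> p - 1" by (rule degree_le) (auto simp: coeff_cyc)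
  show "p - 1 \<le> degree (cyc p)" by (rule le_degree) (use assms in \<open>auto simp: coeff_cyc\<close>)
qed

lemma pcompose_xpow: "pcompose ([:0,1:]^r) q = q^r"
  by (induction r) (auto simp: pcompose_mult pcompose_pCons pcompose_1)

lemma coeff_cyc_shift: "coeff (pcompose (cyc p) [:1,1:]) k = (if k < p then int (p choose (k+1)) else 0)"
proof -
  have "coeff (pcompose (cyc p) [:1,1:]) k = (\<Sum>r<p. coeff ([:1,1:]^r) k)"
    unfolding cyc_def by (simp add: pcompose_sum pcompose_xpow coeff_sum)
  also have "\<dots> = (\<Sum>r<p. int (r choose k))"
  proof (rule sum.cong)
    fix r assume "r \<in> {..<p}"
    show "coeff ([:1,1:]^r) k = int (r choose k)"
    proof (cases "k \<le> r")
      case True then show ?thesis by (simp add: coeff_linear_poly_power)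
    next
      case False
      have "degree ([:1::int,1:]^r) \<le> r" using degree_power_le[of "[:1::int,1:]" r] by simp
      then have "coeff ([:1,1:]^r :: int poly) k = 0" using False by (intro coeff_eq_0) linarith
      then show ?thesis using False by simp
    qed
  qed simp
  also have "\<dots> = (if k < p then int (p choose (k+1)) else 0)"
  proof (cases p)
    case 0 then show ?thesis by simp
  next
    case (Suc q)
    have "(\<Sum>r<p. int (r choose k)) = int (\<Sum>r\<le>q. r choose k)"
      using Suc lessThan_Suc_atMost by (simp add: of_nat_sum)
    also have "\<dots> = int (p choose (k+1))" using Suc by (simp add: sum_choose_upper)
    finally show ?thesis using Suc by (auto simp: binomial_eq_0)
  qed
  finally show ?thesis .
qed

lemma lowest_dvd:
  fixes A B C :: "int poly" and q :: int
  assumes C: "C = A * B" and q: "prime q"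
    and low: "\<forall>k<degree C. q dvd coeff C k" and lead: "\<not> q dvd lead_coeff C"
  shows "\<forall>k<degree A. q dvd coeff A k"
proof (rule ccontr)
  assume "\<not> (\<forall>k<degree A. q dvd coeff A k)"
  then obtain i0 where i0: "i0 < degree A" "\<not> q dvd coeff A i0" by auto
  define i where "i = (LEAST k. \<not> q dvd coeff A k)"
  have iA: "\<not> q dvd coeff A i" unfolding i_def by (rule LeastI[of _ i0]) (use i0 in auto)
  have ile: "i \<le> i0" unfolding i_def by (rule Least_le) (use i0 in auto)
  have ibelow: "\<And>u. u < i \<Longrightarrow> q dvd coeff A u" unfolding i_def using not_less_Least by blast
  have "C \<noteq> 0" using lead by auto
  then have AB0: "A \<noteq> 0" "B \<noteq> 0" using C by auto
  have "lead_coeff C = lead_coeff A * lead_coeff B" using C by (simp add: lead_coeff_mult)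
  then have lB: "\<not> q dvd lead_coeff B" using lead by (metis dvd_mult)
  define j where "j = (LEAST k. \<not> q dvd coeff B k)"
  have jB: "\<not> q dvd coeff B j" unfolding j_def by (rule LeastI[of _ "degree B"]) (use lB in auto)
  have jle: "j \<le> degree B" unfolding j_def by (rule Least_le) (use lB in auto)
  have jbelow: "\<And>u. u < j \<Longrightarrow> q dvd coeff B u" unfolding j_def using not_less_Least by blast
  have degC: "degree C = degree A + degree B" using C AB0 by (simp add: degree_mult_eq)
  have "i + j < degree C" using degC i0 ile jle by linarith
  then have dC: "q dvd coeff C (i+j)" using low by auto
  have "coeff C (i+j) = (\<Sum>u\<le>i+j. coeff A u * coeff B (i+j-u))" using C by (simp add: coeff_mult)
  also have "\<dots> = coeff A i * coeff B j + (\<Sum>u\<in>{..i+j}-{i}. coeff A u * coeff B (i+j-u))"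
    by (subst sum.remove[of _ i]) auto
  finally have eq: "coeff C (i+j) = coeff A i * coeff B j + (\<Sum>u\<in>{..i+j}-{i}. coeff A u * coeff B (i+j-u))" .
  have "q dvd (\<Sum>u\<in>{..i+j}-{i}. coeff A u * coeff B (i+j-u))"
  proof (rule dvd_sum)
    fix u assume u: "u \<in> {..i+j}-{i}"
    show "q dvd coeff A u * coeff B (i+j-u)"
    proof (cases "u < i")
      case True then show ?thesis using ibelow by auto
    next
      case False then have "i+j-u < j" using u by auto
      then show ?thesis using jbelow by auto
    qed
  qed
  then have "q dvd coeff A i * coeff B j" using dC eq by (metis dvd_add_left_iff)
  then show False using q iA jB by (metis prime_dvd_mult_iff)
qed

lemma cyc_irreducible:
  assumes p: "prime p"
  shows "irreducible (cyc p)"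
proof (rule irreducibleI)
  have p2: "p \<ge> 2" using p by (simp add: prime_ge_2_nat)
  have dc: "degree (cyc p) = p - 1" using p2 by (simp add: degree_cyc)
  show "cyc p \<noteq> 0" using p2 coeff_cyc[of p 0] by auto
  show "\<not> is_unit (cyc p)" using dc p2 by (auto simp: is_unit_poly_iff)
  fix A B assume AB: "cyc p = A * B"
  have lc: "lead_coeff (cyc p) = 1" using dc p2 by (simp add: coeff_cyc)
  have AB0: "A \<noteq> 0" "B \<noteq> 0" using AB \<open>cyc p \<noteq> 0\<close> by auto
  define C where "C = pcompose (cyc p) [:1,1:]"
  define A' where "A' = pcompose A [:1,1:]"
  define B' where "B' = pcompose B [:1,1:]"
  have C: "C = A' * B'" unfolding C_def A'_def B'_def AB by (simp add: pcompose_mult)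
  have dC: "degree C = p - 1" unfolding C_def by (simp add: degree_pcompose dc)
  have dA: "degree A' = degree A" "degree B' = degree B" unfolding A'_def B'_def by (simp_all add: degree_pcompose)
  have qp: "prime (int p)" using p by simp
  have low: "\<forall>k<degree C. int p dvd coeff C k"
  proof (intro allI impI)
    fix k assume "k < degree C"
    then have "k + 1 < p" "k < p" using dC by auto
    then show "int p dvd coeff C k" unfolding C_def coeff_cyc_shift
      using dvd_choose_prime[of "k+1" p] p by (simp add: int_dvd_int_iff)
  qed
  have ld: "\<not> int p dvd lead_coeff C"
  proof -
    have "lead_coeff C = 1" using dC p2 unfolding C_def coeff_cyc_shift by simp
    then show ?thesis using qp by (simp add: prime_int_iff)
  qed
  have c0: "coeff C 0 = int p" unfolding C_def coeff_cyc_shift using p2 by simp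
  show "is_unit A \<or> is_unit B"
  proof (cases "degree A = 0 \<or> degree B = 0")
    case True
    have "lead_coeff A * lead_coeff B = 1" using lc AB by (simp add: lead_coeff_mult)
    then have "is_unit (lead_coeff A)" "is_unit (lead_coeff B)" by (metis dvd_triv_left dvd_triv_right)+
    then show ?thesis using True by (metis degree_0_id is_unit_poly_iff)
  next
    case False
    have "\<forall>k<degree A'. int p dvd coeff A' k" by (rule lowest_dvd[OF C qp low ld])
    then have a0: "int p dvd coeff A' 0" using False dA by auto
    have "\<forall>k<degree B'. int p dvd coeff B' k" by (rule lowest_dvd[of C B' A' "int p"]) (use C qp low ld in \<open>auto simp: mult.commute\<close>)
    then have b0: "int p dvd coeff B' 0" using False dA by auto
    have "coeff C 0 = coeff A' 0 * coeff B' 0" using C by (simp add: coeff_mult_0)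
    then have "int p * int p dvd int p" using a0 b0 c0 by (metis mult_dvd_mono)
    then show ?thesis using p2 by simp
  qed
qed

lemma map_poly_of_int_mult: "map_poly (of_int :: int \<Rightarrow> 'a::comm_ring_1) (P * Q) = map_poly of_int P * map_poly of_int Q"
  by (rule poly_eqI) (simp add: coeff_map_poly coeff_mult of_int_sum)

lemma map_poly_of_int_add: "map_poly (of_int :: int \<Rightarrow> 'a::comm_ring_1) (P + Q) = map_poly of_int P + map_poly of_int Q"
  by (rule poly_eqI) (simp add: coeff_map_poly)

lemma map_poly_of_int_smult: "map_poly (of_int :: int \<Rightarrow> 'a::comm_ring_1) (smult c Q) = smult (of_int c) (map_poly of_int Q)"
  by (rule poly_eqI) (simp add: coeff_map_poly)

lemma map_poly_of_int_sum: "map_poly (of_int :: int \<Rightarrow> 'a::comm_ring_1) (sum f A) = (\<Sum>x\<in>A. map_poly of_int (f x))"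
  by (rule poly_eqI) (simp add: coeff_map_poly coeff_sum of_int_sum)

lemma cyc_vanish:
  fixes E :: "nat \<Rightarrow> int" and z :: complex
  assumes p: "prime p" and zp: "z^p = 1" and z1: "z \<noteq> 1"
    and S: "(\<Sum>r<p. of_int (E r) * z^r) = 0"
  shows "\<forall>r<p. E r = E 0"
proof -
  define ev where "ev P = poly (map_poly (of_int :: int \<Rightarrow> complex) P) z" for P
  have ev_mult: "ev (P * Q) = ev P * ev Q" for P Q unfolding ev_def by (simp add: map_poly_of_int_mult)
  have ev_add: "ev (P + Q) = ev P + ev Q" for P Q unfolding ev_def by (simp add: map_poly_of_int_add)
  have ev_smult: "ev (smult c Q) = of_int c * ev Q" for c Q unfolding ev_def by (simp add: map_poly_of_int_smult)
  have ev_const: "ev [:c:] = of_int c" for c unfolding ev_def by (simp add: map_poly_pCons)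
  have ev_sum: "ev (sum f A) = (\<Sum>x\<in>A. ev (f x))" for f :: "nat \<Rightarrow> int poly" and A
    unfolding ev_def by (simp add: map_poly_of_int_sum poly_sum)
  have ev_pow: "ev (P^k) = ev P ^ k" for P k
    by (induction k) (simp_all add: ev_mult, simp add: ev_def)
  have ev_x: "ev [:0,1:] = z" unfolding ev_def by (simp add: map_poly_pCons)
  have p2: "p \<ge> 2" using p by (simp add: prime_ge_2_nat)
  define \<Phi> where "\<Phi> = cyc p"
  have dP: "degree \<Phi> = p - 1" unfolding \<Phi>_def using p2 by (simp add: degree_cyc)
  have P0: "\<Phi> \<noteq> 0" using dP p2 by auto
  have ev\<Phi>: "ev \<Phi> = 0"
  proof -
    have "ev \<Phi> = (\<Sum>r<p. z^r)" unfolding \<Phi>_def cyc_def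
      by (simp add: ev_sum ev_pow ev_x)
    also have "\<dots> = 0" using z1 zp by (simp add: geometric_sum)
    finally show ?thesis .
  qed
  have prm: "prime_elem \<Phi>" unfolding \<Phi>_def using cyc_irreducible[OF p] by (rule irreducible_imp_prime_poly)
  define Q where "Q = (\<Sum>r<p. monom (E r) r)"
  have cQ: "coeff Q k = (if k < p then E k else 0)" for k unfolding Q_def by (simp add: coeff_sum coeff_monom)
  have evQ: "ev Q = 0" unfolding ev_def Q_def using S
    by (simp add: map_poly_of_int_sum poly_sum map_poly_monom poly_monom)
  have dQ: "degree Q \<le> p - 1" by (rule degree_le) (auto simp: cQ)
  have "\<exists>m. (m \<noteq> 0 \<and> ev m = 0) \<and> (\<forall>y. (y \<noteq> 0 \<and> ev y = 0) \<longrightarrow> degree m \<le> degree y)"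
    by (rule ex_has_least_nat[of "\<lambda>P. P \<noteq> 0 \<and> ev P = 0" \<Phi> degree]) (use P0 ev\<Phi> in auto)
  then obtain m where m: "m \<noteq> 0" "ev m = 0" and mmin: "\<And>y. y \<noteq> 0 \<Longrightarrow> ev y = 0 \<Longrightarrow> degree m \<le> degree y"
    by blast
  have key: "\<exists>a q. a \<noteq> 0 \<and> smult a P = m * q" if "ev P = 0" for P
  proof -
    obtain a q where aq: "a \<noteq> 0" "smult a P = m * q + pseudo_mod P m" using pseudo_mod(1)[OF m(1)] by blast
    have "ev (pseudo_mod P m) = 0"
    proof -
      have "ev (smult a P) = ev (m*q) + ev (pseudo_mod P m)" using aq by (simp add: ev_add)
      then show ?thesis using that m(2) by (simp add: ev_smult ev_mult)
    qed
    moreover have "pseudo_mod P m = 0 \<or> degree (pseudo_mod P m) < degree m" using pseudo_mod(2)[OF m(1)] .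
    ultimately have "pseudo_mod P m = 0" using mmin by force
    then show ?thesis using aq by auto
  qed
  obtain a q where aq: "a \<noteq> 0" "smult a \<Phi> = m * q" using key[OF ev\<Phi>] by blast
  have "\<Phi> dvd m * q" using aq(2) by (metis dvd_smult dvd_refl)
  then have "\<Phi> dvd m \<or> \<Phi> dvd q" using prm by (simp add: prime_elem_dvd_mult_iff)
  then have "\<Phi> dvd m"
  proof
    assume "\<Phi> dvd q"
    then obtain v where v: "q = \<Phi> * v" by (elim dvdE)
    have "\<Phi> * (m * v) = \<Phi> * [:a:]" using aq(2) v by (simp add: ac_simps)
    then have mv: "m * v = [:a:]" using P0 by (metis mult_left_cancel)
    then have "v \<noteq> 0" using aq(1) by auto
    then have "degree m = 0" using mv m(1) by (metis add_is_0 degree_mult_eq degree_pCons_0)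
    then obtain c where "m = [:c:]" by (elim degree_eq_zeroE)
    then show "\<Phi> dvd m" using m ev_const by simp
  qed (simp)
  obtain a' q' where aq': "a' \<noteq> 0" "smult a' Q = m * q'" using key[OF evQ] by blast
  have "[:a':] * Q = m * q'" using aq'(2) by simp
  then have "\<Phi> dvd [:a':] * Q" using \<open>\<Phi> dvd m\<close> by (metis dvd_mult2)
  then have "\<Phi> dvd [:a':] \<or> \<Phi> dvd Q" using prm by (metis prime_elem_dvd_mult_iff)
  moreover have "\<not> \<Phi> dvd [:a':]"
  proof
    assume "\<Phi> dvd [:a':]"
    then have "degree \<Phi> \<le> degree [:a':]" using aq'(1) by (intro dvd_imp_degree_le) auto
    then show False using dP p2 by simp
  qed
  ultimately have "\<Phi> dvd Q" by blast
  then obtain T where T: "Q = \<Phi> * T" by (elim dvdE)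
  show ?thesis
  proof (cases "T = 0")
    case True
    then have "Q = 0" using T by simp
    then have "\<forall>r<p. E r = 0" using cQ by (metis coeff_0)
    then show ?thesis using p2 by auto
  next
    case False
    then have "degree Q = p - 1 + degree T" using T P0 dP by (simp add: degree_mult_eq)
    then have "degree T = 0" using dQ by simp
    then obtain c where c: "T = [:c:]" by (elim degree_eq_zeroE)
    have "\<forall>r<p. E r = c"
    proof (intro allI impI)
      fix r assume "r < p"
      have "coeff Q r = c * coeff \<Phi> r" using T c by (simp add: mult.commute)
      then show "E r = c" using cQ \<open>r < p\<close> by (simp add: \<Phi>_def coeff_cyc)
    qed
    then show ?thesis using p2 by auto
  qed
qed

definition W :: "nat \<Rightarrow> int \<Rightarrow> complex" where
  "W n x = exp (2 * pi * \<i> * of_int x / of_nat n)"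

lemma W_add: "W n (x + y) = W n x * W n y"
  unfolding W_def by (simp add: exp_add[symmetric] add_divide_distrib distrib_left)

lemma W_int_mult: "W n (x * int n) = 1" if "n > 0"
proof -
  have "2 * pi * \<i> * of_int (x * int n) / of_nat n = \<i> * (complex_of_int x * (complex_of_real pi * 2))"
    using that by (simp add: field_simps)
  then show ?thesis unfolding W_def by (simp add: exp_2pi_1_int)
qed

lemma W_per: "W n (x + y * int n) = W n x" if "n > 0"
  using that by (simp add: W_add W_int_mult)

lemma W_mod: "W n (x mod int n) = W n x" if "n > 0"
proof -
  have "x = x mod int n + (x div int n) * int n" by simp
  then show ?thesis using W_per[OF that, of "x mod int n" "x div int n"] by metis
qed

lemma W_one_iff: "W n x = 1 \<longleftrightarrow> int n dvd x" if "n > 0"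
proof
  assume "int n dvd x"
  then obtain y where "x = y * int n" by (metis dvd_def mult.commute)
  then show "W n x = 1" using W_int_mult[OF that] by simp
next
  assume "W n x = 1"
  then obtain k where k: "Im (2 * pi * \<i> * of_int x / of_nat n) = real_of_int (2 * k) * pi"
    unfolding W_def exp_eq_1 by blast
  have "Im (2 * pi * \<i> * of_int x / of_nat n) = 2 * pi * x / n" by simp
  then have "2 * pi * x / n = 2 * k * pi" using k by simp
  then have "real_of_int x = real_of_int (k * int n)" using that by (simp add: field_simps)
  then have "x = k * int n" by linarith
  then show "int n dvd x" by simp
qed

lemma W_pow: "W n (int m * x) = W n x ^ m"
  unfolding W_def by (simp add: exp_of_nat_mult[symmetric] mult_ac)

lemma W_cnj: "cnj (W n x) = W n (- x)"
  unfolding W_def by (simp add: exp_cnj)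

lemma W_norm: "norm (W n x) = 1"
  unfolding W_def by (simp add: norm_exp_eq_Re)

lemma W_0: "W n 0 = 1" unfolding W_def by simp

lemma orth: "(\<Sum>m<n. W n (int m * x)) = (if int n dvd x then of_nat n else 0)" if "n > 0"
proof (cases "int n dvd x")
  case True
  then have "W n (int m * x) = 1" for m using W_one_iff[OF that] by simp
  then show ?thesis using True by simp
next
  case False
  then have ne: "W n x \<noteq> 1" using W_one_iff[OF that] by simp
  have "W n x ^ n = 1" using W_pow[of n n x] W_one_iff[OF that, of "int n * x"] by simp
  then have "(\<Sum>m<n. W n x ^ m) = 0" using ne by (simp add: geometric_sum)
  then show ?thesis using False by (simp add: W_pow)
qed

definition lam :: "nat \<Rightarrow> (nat \<Rightarrow> complex) \<Rightarrow> nat \<Rightarrow> complex" where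
  "lam n b m = (\<Sum>s<n. b s * W n (int m * int s))"

lemma circ_carrier: "circ n b \<in> carrier_mat n n" unfolding circ_def by simp

lemma circ_index: "j < n \<Longrightarrow> k < n \<Longrightarrow> circ n b $$ (j,k) = b (nat ((int k - int j) mod int n))"
  unfolding circ_def by simp

lemma reindex_lam:
  assumes n: "n > 0" and k: "k < n"
  shows "(\<Sum>l<n. W n (- (int m * int l)) * b (nat ((int k - int l) mod int n))) = lam n b m * W n (- (int m * int k))"
proof -
  have "(\<Sum>l<n. W n (- (int m * int l)) * b (nat ((int k - int l) mod int n))) = (\<Sum>s<n. b s * W n (int m * int s - int m * int k))"
  proof (rule sum.reindex_bij_witness[where i = "\<lambda>s. nat ((int k - int s) mod int n)" and j = "\<lambda>l. nat ((int k - int l) mod int n)"])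
    fix l assume l: "l \<in> {..<n}"
    have "(int k - (int k - int l) mod int n) mod int n = (int k - (int k - int l)) mod int n"
      by (simp add: mod_diff_right_eq)
    also have "\<dots> = int l" using l by simp
    finally show "nat ((int k - int (nat ((int k - int l) mod int n))) mod int n) = l" using n by simp
    show "nat ((int k - int l) mod int n) \<in> {..<n}" using n by (simp add: nat_less_iff)
    have e: "(int k - int l) mod int n = (int k - int l) - ((int k - int l) div int n) * int n"
      by (simp add: minus_div_mult_eq_mod)
    have nn: "int (nat ((int k - int l) mod int n)) = (int k - int l) mod int n" using n by simp
    have "int m * int (nat ((int k - int l) mod int n)) - int m * int k
          = - (int m * int l) + (- (int m * ((int k - int l) div int n))) * int n"
    proof -
      have g: "\<And>q::int. int m * ((int k - int l) - q * int n) - int m * int k = - (int m * int l) + (- (int m * q)) * int n"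
        by (simp add: algebra_simps)
      show ?thesis unfolding nn by (subst e) (rule g)
    qed
    then have "W n (int m * int (nat ((int k - int l) mod int n)) - int m * int k) = W n (- (int m * int l) + (- (int m * ((int k - int l) div int n))) * int n)"
      by (simp only:)
    also have "\<dots> = W n (- (int m * int l))" by (rule W_per[OF n])
    finally have "W n (int m * int (nat ((int k - int l) mod int n)) - int m * int k) = W n (- (int m * int l))" .
    then show "b (nat ((int k - int l) mod int n)) * W n (int m * int (nat ((int k - int l) mod int n)) - int m * int k)
       = W n (- (int m * int l)) * b (nat ((int k - int l) mod int n))" by simp
  next
    fix s assume s: "s \<in> {..<n}"
    have "(int k - (int k - int s) mod int n) mod int n = (int k - (int k - int s)) mod int n"
      by (simp add: mod_diff_right_eq)
    also have "\<dots> = int s" using s by simp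
    finally show "nat ((int k - int (nat ((int k - int s) mod int n))) mod int n) = s" using n by simp
    show "nat ((int k - int s) mod int n) \<in> {..<n}" using n by (simp add: nat_less_iff)
  qed
  also have "\<dots> = lam n b m * W n (- (int m * int k))"
    unfolding lam_def sum_distrib_right by (simp add: W_add[symmetric] mult.assoc)
  finally show ?thesis .
qed

lemma sum_swap_aux:
  fixes F :: "nat \<Rightarrow> complex"
  shows "(\<Sum>l\<in>A. (\<Sum>m\<in>B. F m * G l m) / N * c l) = (\<Sum>m\<in>B. F m * (\<Sum>l\<in>A. G l m * c l)) / N"
proof -
  have "(\<Sum>l\<in>A. (\<Sum>m\<in>B. F m * G l m) / N * c l) = (\<Sum>l\<in>A. \<Sum>m\<in>B. F m * G l m * c l / N)"
    by (simp add: sum_divide_distrib sum_distrib_right)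
  also have "\<dots> = (\<Sum>m\<in>B. \<Sum>l\<in>A. F m * G l m * c l / N)" by (rule sum.swap)
  also have "\<dots> = (\<Sum>m\<in>B. F m * (\<Sum>l\<in>A. G l m * c l)) / N"
    by (simp add: sum_divide_distrib sum_distrib_left mult.assoc)
  finally show ?thesis .
qed

lemma W_split: "W n (int m * (int j - int l)) = W n (int m * int j) * W n (- (int m * int l))"
  by (metis W_add diff_conv_add_uminus right_diff_distrib)

lemma t1: assumes "j < n" "k < n" shows "(circ n b ^\<^sub>m 0) $$ (j,k) = (if j = k then 1 else 0)"
proof -
  have "dim_row (circ n b) = n" unfolding circ_def by (rule dim_row_mat)
  then show ?thesis using assms by (simp add: index_one_mat)
qed
lemma t2: assumes n: "n > 0" and "j < n" "k < n" shows "(circ n b ^\<^sub>m 0) $$ (j,k) = (\<Sum>m<n. lam n b m ^ 0 * W n (int m * (int j - int k))) / of_nat n"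
proof -
  have iff: "int n dvd (int j - int k) \<longleftrightarrow> j = k"
  proof
    assume d: "int n dvd (int j - int k)"
    have "\<bar>int j - int k\<bar> < int n" using assms by auto
    then have "int j - int k = 0" using d dvd_imp_le_int[of "int j - int k" "int n"] by linarith
    then show "j = k" by simp
  qed simp
  have "(\<Sum>m<n. W n (int m * (int j - int k))) = (if int n dvd (int j - int k) then of_nat n else 0)" 
    by (rule orth[OF n])
  also have "\<dots> = (if j = k then of_nat n else 0)" by (simp only: iff)
  finally have s: "(\<Sum>m<n. lam n b m ^ 0 * W n (int m * (int j - int k))) = (if j = k then of_nat n else 0)" by simp
  show ?thesis unfolding s t1[OF assms(2,3)] using n by simp
qed

lemma t3: assumes n: "n > 0" and j: "j < n" and k: "k < n"
  shows "(circ n b ^\<^sub>m Suc N) $$ (j,k) = (\<Sum>l<n. (circ n b ^\<^sub>m N) $$ (j,l) * circ n b $$ (l,k))"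
proof -
  have A: "circ n b \<in> carrier_mat n n" by (rule circ_carrier)
  have cp: "circ n b ^\<^sub>m N \<in> carrier_mat n n" by (rule pow_carrier_mat[OF circ_carrier])
  have "(circ n b ^\<^sub>m Suc N) $$ (j,k) = scalar_prod (Matrix.row (circ n b ^\<^sub>m N) j) (Matrix.col (circ n b) k)"
    using cp A j k by (simp add: index_mult_mat)
  also have "\<dots> = (\<Sum>l = 0..<n. (circ n b ^\<^sub>m N) $$ (j,l) * circ n b $$ (l,k))"
    unfolding scalar_prod_def using cp A j k by (intro sum.cong) auto
  finally show ?thesis by (simp add: atLeast0LessThan)
qed

lemma circ_pow:
  assumes n: "n > 0" and j: "j < n" and k: "k < n"
  shows "(circ n b ^\<^sub>m N) $$ (j,k) = (\<Sum>m<n. lam n b m ^ N * W n (int m * (int j - int k))) / of_nat n"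
  using j k
proof (induction N arbitrary: j k)
  case 0
  then show ?case by (rule t2[OF n])
next
  case (Suc N)
  have "(circ n b ^\<^sub>m Suc N) $$ (j,k) = (\<Sum>l<n. (circ n b ^\<^sub>m N) $$ (j,l) * circ n b $$ (l,k))"
    by (rule t3[OF n Suc.prems])
  also have "\<dots> = (\<Sum>l<n. (\<Sum>m<n. lam n b m ^ N * W n (int m * (int j - int l))) / of_nat n * b (nat ((int k - int l) mod int n)))"
  proof (rule sum.cong)
    fix l assume "l \<in> {..<n}"
    then show "(circ n b ^\<^sub>m N) $$ (j,l) * circ n b $$ (l,k) = (\<Sum>m<n. lam n b m ^ N * W n (int m * (int j - int l))) / of_nat n * b (nat ((int k - int l) mod int n))"
      using Suc.IH[of j l] Suc.prems circ_index[of l n k b] by simp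
  qed simp
  also have "\<dots> = (\<Sum>m<n. lam n b m ^ N * (\<Sum>l<n. W n (int m * (int j - int l)) * b (nat ((int k - int l) mod int n)))) / of_nat n"
    by (rule sum_swap_aux)
  also have "\<dots> = (\<Sum>m<n. lam n b m ^ N * W n (int m * int j) * (\<Sum>l<n. W n (- (int m * int l)) * b (nat ((int k - int l) mod int n)))) / of_nat n"
    by (simp only: W_split sum_distrib_left mult.assoc)
  also have "\<dots> = (\<Sum>m<n. lam n b m ^ N * W n (int m * int j) * (lam n b m * W n (- (int m * int k)))) / of_nat n"
    by (simp only: reindex_lam[OF n Suc.prems(2)])
  also have "\<dots> = (\<Sum>m<n. lam n b m ^ Suc N * W n (int m * (int j - int k))) / of_nat n"
    by (simp only: W_split[of n _ j k] mult_ac power_Suc)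
  finally show ?case .
qed

lemma circ_smult: "c \<cdot>\<^sub>m circ n a = circ n (\<lambda>s. c * a s)"
  by (rule eq_matI) (auto simp: circ_def)

lemma lam_smult: "lam n (\<lambda>s. c * a s) m = c * lam n a m"
  by (simp add: lam_def sum_distrib_left mult.assoc)

lemma exp_sums_c: "(\<lambda>N. (x::complex) ^ N / of_nat (fact N)) sums exp x"
proof -
  have "(\<lambda>N. x ^ N /\<^sub>R fact N) sums exp x" by (rule exp_converges)
  moreover have "x ^ N /\<^sub>R fact N = x ^ N / of_nat (fact N)" for N
    by (simp add: scaleR_conv_of_real divide_inverse_commute)
  ultimately show ?thesis by simp
qed

lemma exp_circ:
  assumes n: "n > 0" and j: "j < n" and k: "k < n"
  shows "mat_exp (c \<cdot>\<^sub>m circ n a) $$ (j,k) = (\<Sum>m<n. exp (c * lam n a m) * W n (int m * (int j - int k))) / of_nat n"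
proof -
  let ?b = "\<lambda>s. c * a s"
  have dims: "dim_row (circ n ?b) = n" "dim_col (circ n ?b) = n" unfolding circ_def by simp_all
  have "mat_exp (c \<cdot>\<^sub>m circ n a) $$ (j,k) = (\<Sum>N. (circ n ?b ^\<^sub>m N) $$ (j,k) / of_nat (fact N))"
    unfolding circ_smult mat_exp_def using dims j k by simp
  also have "\<dots> = (\<Sum>N. \<Sum>m<n. (c * lam n a m) ^ N / of_nat (fact N) * (W n (int m * (int j - int k)) / of_nat n))"
  proof (rule arg_cong[where f = suminf], rule ext)
    fix N
    show "(circ n ?b ^\<^sub>m N) $$ (j,k) / of_nat (fact N) = (\<Sum>m<n. (c * lam n a m) ^ N / of_nat (fact N) * (W n (int m * (int j - int k)) / of_nat n))"
      unfolding circ_pow[OF n j k] lam_smult by (simp add: sum_divide_distrib mult.commute)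
  qed
  also have "\<dots> = (\<Sum>m<n. exp (c * lam n a m) * (W n (int m * (int j - int k)) / of_nat n))"
  proof (rule sums_unique[symmetric], rule sums_sum)
    fix m
    show "(\<lambda>N. (c * lam n a m) ^ N / of_nat (fact N) * (W n (int m * (int j - int k)) / of_nat n)) sums
      (exp (c * lam n a m) * (W n (int m * (int j - int k)) / of_nat n))"
      by (rule sums_mult2[OF exp_sums_c])
  qed
  also have "\<dots> = (\<Sum>m<n. exp (c * lam n a m) * W n (int m * (int j - int k))) / of_nat n"
    by (simp add: sum_divide_distrib)
  finally show ?thesis .
qed

lemma herm_coeff:
  assumes h: "hermitian_mat (circ n a)" and s: "s < n"
  shows "cnj (a s) = a (nat ((- int s) mod int n))"
proof -
  have dr: "dim_row (circ n a) = n" using circ_carrier by blast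
  have H: "\<forall>i<n. \<forall>j<n. circ n a $$ (j, i) = cnj (circ n a $$ (i, j))"
    using h dr unfolding hermitian_mat_def by metis
  have "0 < n" using s by simp
  then have "circ n a $$ (s, 0) = cnj (circ n a $$ (0, s))"
    using H s by blast
  moreover have "circ n a $$ (0, s) = a s" using s by (simp add: circ_index)
  moreover have "circ n a $$ (s, 0) = a (nat ((- int s) mod int n))" using s by (simp add: circ_index)
  ultimately show ?thesis by simp
qed

lemma lam_real:
  assumes h: "hermitian_mat (circ n a)" and n: "n > 0"
  shows "cnj (lam n a m) = lam n a m"
proof -
  have "cnj (lam n a m) = (\<Sum>s<n. a (nat ((- int s) mod int n)) * W n (- (int m * int s)))"
    unfolding lam_def cnj_sum
  proof (rule sum.cong)
    fix s assume "s \<in> {..<n}"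
    then show "cnj (a s * W n (int m * int s)) = a (nat ((- int s) mod int n)) * W n (- (int m * int s))"
      using herm_coeff[OF h, of s] by (simp add: W_cnj)
  qed simp
  also have "\<dots> = lam n a m"
    unfolding lam_def
  proof (rule sum.reindex_bij_witness[where i = "\<lambda>s. nat ((- int s) mod int n)" and j = "\<lambda>s. nat ((- int s) mod int n)"])
    fix s assume s: "s \<in> {..<n}"
    have "(- ((- int s) mod int n)) mod int n = (- (- int s)) mod int n" by (simp add: mod_minus_eq)
    also have "\<dots> = int s" using s by simp
    finally show "nat ((- int (nat ((- int s) mod int n))) mod int n) = s" using n by simp
    show "nat ((- int s) mod int n) \<in> {..<n}" using n by (simp add: nat_less_iff)
    have nn: "int (nat ((- int s) mod int n)) = (- int s) mod int n" using n by simp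
    have e: "(- int s) mod int n = (- int s) - ((- int s) div int n) * int n"
      by (simp add: minus_div_mult_eq_mod)
    have g: "\<And>q::int. int m * ((- int s) - q * int n) = - (int m * int s) + (- (int m * q)) * int n"
      by (simp add: algebra_simps)
    have "int m * int (nat ((- int s) mod int n)) = - (int m * int s) + (- (int m * ((- int s) div int n))) * int n"
      unfolding nn by (subst e) (rule g)
    then have "W n (int m * int (nat ((- int s) mod int n))) = W n (- (int m * int s) + (- (int m * ((- int s) div int n))) * int n)"
      by (simp only:)
    also have "\<dots> = W n (- (int m * int s))" by (rule W_per[OF n])
    finally show "a (nat ((- int s) mod int n)) * W n (int m * int (nat ((- int s) mod int n))) =
                  a (nat ((- int s) mod int n)) * W n (- (int m * int s))" by simp
  next
    fix s assume s: "s \<in> {..<n}"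
    have "(- ((- int s) mod int n)) mod int n = (- (- int s)) mod int n" by (simp add: mod_minus_eq)
    also have "\<dots> = int s" using s by simp
    finally show "nat ((- int (nat ((- int s) mod int n))) mod int n) = s" using n by simp
    show "nat ((- int s) mod int n) \<in> {..<n}" using n by (simp add: nat_less_iff)
  qed
  finally show ?thesis .
qed

lemma norm_sum_eq:
  fixes z :: "nat \<Rightarrow> complex"
  assumes nz: "\<And>m. m < n \<Longrightarrow> norm (z m) = 1" and ns: "norm (\<Sum>m<n. z m) = real n" and n: "n > 0"
  shows "\<And>m. m < n \<Longrightarrow> z m = (\<Sum>m<n. z m) / of_nat n"
proof -
  define u where "u = (\<Sum>m<n. z m)"
  have nu: "norm u = real n" using ns u_def by simp
  have le: "Re (z m * cnj u) \<le> real n" if "m < n" for m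
  proof -
    have "Re (z m * cnj u) \<le> norm (z m * cnj u)" by (rule complex_Re_le_cmod)
    also have "\<dots> = real n" using nz[OF that] nu by (simp add: norm_mult)
    finally show ?thesis .
  qed
  have ucu: "u * cnj u = of_nat n * of_nat n"
    using complex_norm_square[of u] nu by (simp add: power2_eq_square)
  have "(\<Sum>m<n. Re (z m * cnj u)) = Re ((\<Sum>m<n. z m) * cnj u)"
    by (simp add: sum_distrib_right)
  also have "\<dots> = Re (u * cnj u)" by (simp add: u_def)
  also have "\<dots> = real n * real n" using ucu by simp
  finally have sumeq: "(\<Sum>m<n. real n - Re (z m * cnj u)) = 0" by (simp add: sum_subtractf)
  have each: "Re (z m * cnj u) = real n" if "m < n" for m
  proof -
    have "\<forall>i\<in>{..<n}. real n - Re (z i * cnj u) = 0"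
      using sum_nonneg_eq_0_iff[of "{..<n}" "\<lambda>i. real n - Re (z i * cnj u)"] sumeq le by auto
    then show ?thesis using that by auto
  qed
  fix m assume m: "m < n"
  define x where "x = z m * cnj u"
  have nx: "norm x = real n" unfolding x_def using nz[OF m] nu by (simp add: norm_mult)
  have rx: "Re x = real n" unfolding x_def using each[OF m] .
  have "(Im x)^2 = 0" using cmod_power2[of x] nx rx by simp
  then have "x = of_nat n" using rx by (simp add: complex_eq_iff)
  then have "z m * (cnj u * u) = of_nat n * u" unfolding x_def by (simp add: mult.assoc)
  moreover have "cnj u * u = of_nat n * of_nat n" using ucu by (simp add: mult.commute)
  ultimately have "z m * of_nat n * of_nat n = of_nat n * u" by (simp add: mult.assoc)
  then show "z m = u / of_nat n" using n by (simp add: field_simps)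
qed

lemma dvd_diff_iff_eq: "j < n \<Longrightarrow> k < n \<Longrightarrow> int n dvd (int j - int k) \<longleftrightarrow> j = k"
proof
  assume a: "j < n" "k < n" and d: "int n dvd (int j - int k)"
  have "\<bar>int j - int k\<bar> < int n" using a by auto
  then have "int j - int k = 0" using d dvd_imp_le_int[of "int j - int k" "int n"] by linarith
  then show "j = k" by simp
qed simp

lemma inv_dft:
  assumes n: "n > 0" and d: "d < n"
  shows "(\<Sum>m<n. lam n a m * W n (int m * (- int d))) = of_nat n * a d"
proof -
  have "(\<Sum>m<n. lam n a m * W n (int m * (- int d))) = (\<Sum>m<n. \<Sum>s<n. a s * W n (int m * (int s - int d)))"
    unfolding lam_def sum_distrib_right
    by (simp add: mult.assoc W_add[symmetric] right_diff_distrib)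
  also have "\<dots> = (\<Sum>s<n. a s * (\<Sum>m<n. W n (int m * (int s - int d))))"
    by (subst sum.swap) (simp add: sum_distrib_left)
  also have "\<dots> = (\<Sum>s<n. a s * (if s = d then of_nat n else 0))"
    by (rule sum.cong) (use n d in \<open>auto simp: orth dvd_diff_iff_eq\<close>)
  also have "\<dots> = (\<Sum>s<n. if s = d then a d * of_nat n else 0)" by (rule sum.cong) auto
  also have "\<dots> = of_nat n * a d" using d by (simp add: mult.commute)
  finally show ?thesis .
qed

lemma group_sum:
  fixes g :: "nat \<Rightarrow> 'a::comm_monoid_add"
  shows "(\<Sum>i<d*p. g i) = (\<Sum>r<p. \<Sum>q<d. g (q*p + r))"
proof -
  have "(\<Sum>i<d*p. g i) = (\<Sum>q<d. sum g {q*p..<q*p+p})" by (rule sum.nat_group[symmetric])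
  also have "\<dots> = (\<Sum>q<d. \<Sum>r<p. g (q*p + r))"
    by (rule sum.cong) (simp_all add: sum.atLeastLessThan_shift_0 atLeast0LessThan)
  also have "\<dots> = (\<Sum>r<p. \<Sum>q<d. g (q*p + r))" by (rule sum.swap)
  finally show ?thesis .
qed

lemma real_of_cnj: "cnj z = z \<Longrightarrow> z = complex_of_real (Re z)"
  by (simp add: complex_eq_iff)

theorem lemma6:
  fixes n d :: nat and a :: "nat \<Rightarrow> complex"
  assumes "hermitian_mat (circ n a)"
    and "universal_pst (circ n a)"
    and "d dvd n" and "odd d" and "prime (n div d)"
  shows "a d \<noteq> 0"
proof
  assume ad: "a d = 0"
  define p where "p = n div d"
  have pp: "prime p" using assms(5) p_def by simp
  have p2: "p \<ge> 2" using pp by (simp add: prime_ge_2_nat)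
  have d0: "d > 0" using assms(4) by (cases d) auto
  have np: "n = d * p" using assms(3) p_def by simp
  have n0: "n > 0" using np d0 p2 by simp
  have dn: "d < n" using np d0 p2 by simp
  have n2: "1 < n" using np d0 p2
    by (metis One_nat_def Suc_le_eq dn d0 le_less_trans linorder_not_le)
  have dr: "dim_row (circ n a) = n" using circ_carrier by blast
  have "\<exists>t::real. t > 0 \<and> cmod (mat_exp ((- \<i> * complex_of_real t) \<cdot>\<^sub>m circ n a) $$ (1, 0)) = 1"
    using assms(2) n2 n0 unfolding universal_pst_def dr by simp
  then obtain t :: real where t0: "t > 0" and tU: "cmod (mat_exp ((- \<i> * complex_of_real t) \<cdot>\<^sub>m circ n a) $$ (1, 0)) = 1"
    by blast
  define c where "c = - \<i> * complex_of_real t"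
  define L where "L m = lam n a m" for m
  define r where "r m = Re (L m)" for m
  have Lr: "L m = complex_of_real (r m)" for m
    unfolding r_def L_def by (rule real_of_cnj[OF lam_real[OF assms(1) n0]])
  define z where "z m = exp (c * L m) * W n (int m)" for m
  have entry: "mat_exp (c \<cdot>\<^sub>m circ n a) $$ (1, 0) = (\<Sum>m<n. z m) / of_nat n"
    unfolding exp_circ[OF n0 n2 n0] z_def L_def by simp
  have nz: "norm (z m) = 1" if "m < n" for m
  proof -
    have "c * L m = \<i> * complex_of_real (- t * r m)" unfolding c_def Lr by simp
    then have "norm (exp (c * L m)) = 1" by (simp add: norm_exp_eq_Re)
    then show ?thesis unfolding z_def by (simp add: norm_mult W_norm)
  qed
  have ns: "norm (\<Sum>m<n. z m) = real n"
  proof -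
    have "norm ((\<Sum>m<n. z m) / of_nat n) = 1" using tU entry c_def by simp
    then show ?thesis using n0 by (simp add: norm_divide)
  qed
  have zeq: "z m = z 0" if "m < n" for m
    using norm_sum_eq[of n z, OF nz ns n0] that n0 by metis
  have "\<forall>m. \<exists>K::int. m < n \<longrightarrow> t * (r 0 - r m) + 2 * pi * real m / real n = real_of_int (2 * K) * pi"
  proof (intro allI)
    fix m
    show "\<exists>K::int. m < n \<longrightarrow> t * (r 0 - r m) + 2 * pi * real m / real n = real_of_int (2 * K) * pi"
    proof (cases "m < n")
      case False then show ?thesis by simp
    next
      case True
      define X where "X = c * L m + 2 * pi * \<i> * of_int (int m) / of_nat n - c * L 0"
      have "exp X = exp (c * L m) * W n (int m) / exp (c * L 0)"
        unfolding X_def W_def by (simp add: exp_add exp_diff)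
      also have "\<dots> = 1" using zeq[OF True] unfolding z_def by (simp add: W_0)
      finally have "exp X = 1" .
      then obtain K where K: "Im X = real_of_int (2 * K) * pi" unfolding exp_eq_1 by blast
      have "Im X = t * (r 0 - r m) + 2 * pi * real m / real n"
        unfolding X_def c_def Lr by (simp add: algebra_simps)
      then show ?thesis using K by (intro exI[of _ K]) auto
    qed
  qed
  then obtain K :: "nat \<Rightarrow> int" where K: "\<And>m. m < n \<Longrightarrow> t * (r 0 - r m) + 2 * pi * real m / real n = real_of_int (2 * K m) * pi"
    by metis
  define \<kappa> where "\<kappa> = 2 * pi / (t * real n)"
  define e where "e m = int m - int n * K m" for m
  have \<kappa>0: "\<kappa> \<noteq> 0" unfolding \<kappa>_def using t0 n0 by simp
  have re: "r m = r 0 + \<kappa> * real_of_int (e m)" if "m < n" for m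
  proof -
    have "t * (r 0 - r m) + 2 * pi * real m / real n = real_of_int (2 * K m) * pi" by (rule K[OF that])
    then show ?thesis unfolding \<kappa>_def e_def using t0 n0 by (simp add: field_simps)
  qed
  define \<zeta> where "\<zeta> = W n (- int d)"
  have ndvd: "\<not> int n dvd (- int d)" using nat_dvd_not_less[OF d0 dn] by simp
  have Wz: "W n (int m * (- int d)) = \<zeta> ^ m" for m unfolding \<zeta>_def by (rule W_pow)
  have "(\<Sum>m<n. L m * W n (int m * (- int d))) = of_nat n * a d"
    unfolding L_def by (rule inv_dft[OF n0 dn])
  also have "\<dots> = 0" using ad by simp
  finally have s0: "(\<Sum>m<n. L m * W n (int m * (- int d))) = 0" .
  have "(\<Sum>m<n. L m * W n (int m * (- int d))) =
        complex_of_real (r 0) * (\<Sum>m<n. W n (int m * (- int d))) + complex_of_real \<kappa> * (\<Sum>m<n. of_int (e m) * \<zeta> ^ m)"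
  proof -
    have "(\<Sum>m<n. L m * W n (int m * (- int d))) = (\<Sum>m<n. complex_of_real (r 0) * W n (int m * (- int d)) + complex_of_real \<kappa> * (of_int (e m) * \<zeta> ^ m))"
    proof (rule sum.cong)
      fix m assume "m \<in> {..<n}"
      then have mn: "m < n" by simp
      have "L m = complex_of_real (r 0 + \<kappa> * real_of_int (e m))" unfolding Lr[of m] re[OF mn] ..
      then have "L m = complex_of_real (r 0) + complex_of_real \<kappa> * of_int (e m)" by simp
      then show "L m * W n (int m * (- int d)) = complex_of_real (r 0) * W n (int m * (- int d)) + complex_of_real \<kappa> * (of_int (e m) * \<zeta> ^ m)"
        unfolding Wz by (simp add: algebra_simps)
    qed simp
    then show ?thesis by (simp add: sum.distrib sum_distrib_left)
  qed
  moreover have "(\<Sum>m<n. W n (int m * (- int d))) = 0" using orth[OF n0, of "- int d"] ndvd by (simp only: if_False)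
  ultimately have "complex_of_real \<kappa> * (\<Sum>m<n. of_int (e m) * \<zeta> ^ m) = 0" using s0 by simp
  then have S: "(\<Sum>m<n. of_int (e m) * \<zeta> ^ m) = 0" using \<kappa>0 by simp
  have zp: "\<zeta> ^ p = 1"
  proof -
    have "\<zeta> ^ p = W n (int p * (- int d))" using Wz[of p] by simp
    moreover have "int n dvd int p * (- int d)" using np by simp
    ultimately show ?thesis using W_one_iff[OF n0] by simp
  qed
  have z1: "\<zeta> \<noteq> 1" unfolding \<zeta>_def using W_one_iff[OF n0] ndvd by simp
  define E where "E r = (\<Sum>q<d. e (q * p + r))" for r
  have "(\<Sum>m<n. of_int (e m) * \<zeta> ^ m) = (\<Sum>r<p. \<Sum>q<d. of_int (e (q*p + r)) * \<zeta> ^ (q*p + r))"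
    unfolding np by (rule group_sum)
  also have "\<dots> = (\<Sum>r<p. of_int (E r) * \<zeta> ^ r)"
  proof (rule sum.cong)
    fix r0 assume "r0 \<in> {..<p}"
    have "\<zeta> ^ (q*p + r0) = \<zeta> ^ r0" for q by (simp add: power_add power_mult mult.commute[of q p] zp)
    then show "(\<Sum>q<d. of_int (e (q*p + r0)) * \<zeta> ^ (q*p + r0)) = of_int (E r0) * \<zeta> ^ r0"
      unfolding E_def by (simp add: sum_distrib_right)
  qed simp
  finally have "(\<Sum>r<p. of_int (E r) * \<zeta> ^ r) = 0" using S by simp
  then have "\<forall>r<p. E r = E 0" by (rule cyc_vanish[OF pp zp z1])
  moreover have "1 < p" using p2 by simp
  ultimately have E10: "E 1 = E 0" by blast
  have "E 1 - E 0 = (\<Sum>q<d. e (q * p + 1) - e (q * p + 0))" unfolding E_def by (simp add: sum_subtractf)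
  also have "\<dots> = (\<Sum>q<d. 1 - int n * (K (q*p+1) - K (q*p)))"
    unfolding e_def by (rule sum.cong) (simp_all add: algebra_simps)
  also have "\<dots> = int d - int n * (\<Sum>q<d. K (q*p+1) - K (q*p))"
    by (simp add: sum_subtractf sum_distrib_left[symmetric])
  finally have "int d = int n * (\<Sum>q<d. K (q*p+1) - K (q*p))" using E10 by simp
  then have "int n dvd int d" by simp
  then show False using nat_dvd_not_less[OF d0 dn] by simp
qed

end
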